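(* The set $\{\kappa_s: 1/2<\Re s<1\}$ spans a dense subspace of $H^2$.
   Context: $H^2$ denotes the Hardy space of analytic functions $f(z)=\sum_{k\ge0}\hat f(k)z^k$ on the open unit disk with $\sum_{k}|\hat f(k)|^2<\infty$. For $s\in\mathbb{C}\setminus\{0\}$ set $\varphi_0(s)=-\frac1s$ and $\varphi_k(s)=-\frac1s\left((k+1)^{1-s}-k^{1-s}\right)$ for $k\geq1$. For $\Re s>1/2$ the zeta kernel is $\kappa_s(z)=\sum_{k=0}^\infty\varphi_k(\bar s)z^k\in H^2$; equivalently $\langle f,\kappa_s\rangle=\Lambda^{(s)}(f)$ where $\Lambda^{(s)}$ is the bounded linear functional on $H^2$ with $\Lambda^{(s)}(z^k)=\varphi_k(s)$. *)

theory Defs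
  imports "HOL-Analysis.Analysis"
begin

text \<open>Elements of the Hardy space H^2 are represented by their Taylor coefficient
  sequences f k = hat f(k); H^2 is the set of square-summable coefficient sequences
  with the norm ||f|| = sqrt (sum_k |hat f(k)|^2).\<close>

definition H2 :: "(nat \<Rightarrow> complex) set" where
  "H2 = {f. summable (\<lambda>k. (cmod (f k))^2)}"

definition H2_norm :: "(nat \<Rightarrow> complex) \<Rightarrow> real" where
  "H2_norm f = sqrt (\<Sum>k. (cmod (f k))^2)"

definition phi :: "complex \<Rightarrow> nat \<Rightarrow> complex" where
  "phi s k = (if k = 0 then - 1 / s
              else - (1 / s) * ((of_nat (k + 1)) powr (1 - s) - (of_nat k) powr (1 - s)))"

text \<open>Coefficient sequence of the zeta kernel kappa_s: hat kappa_s(k) = phi_k(conj s).\<close>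
definition zeta_kernel :: "complex \<Rightarrow> nat \<Rightarrow> complex" where
  "zeta_kernel s = (\<lambda>k. phi (cnj s) k)"

end

theory Submission
  imports Defs "HOL-Complex_Analysis.Complex_Analysis"
begin


lemma H2_summable: "f \<in> H2 \<Longrightarrow> summable (\<lambda>k. (cmod (f k))^2)"
  by (simp add: H2_def)

lemma H2_norm_sq: "f \<in> H2 \<Longrightarrow> H2_norm f ^ 2 = (\<Sum>k. (cmod (f k))^2)"
  unfolding H2_norm_def by (simp add: H2_def suminf_nonneg)


lemma H2_norm_nonneg: "f \<in> H2 \<Longrightarrow> 0 \<le> H2_norm f"
  unfolding H2_norm_def by (simp add: H2_def suminf_nonneg)

lemma H2_partial_le: "f \<in> H2 \<Longrightarrow> (\<Sum>k<n. (cmod (f k))^2) \<le> H2_norm f ^ 2"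
  using H2_norm_sq[of f] by (simp add: H2_def sum_le_suminf)

lemma H2_bound:
  assumes "\<And>n. (\<Sum>k<n. (cmod (f k))^2) \<le> B"
  shows "f \<in> H2" "H2_norm f ^ 2 \<le> B"
proof -
  show h: "f \<in> H2" unfolding H2_def mem_Collect_eq using assms by (intro summableI_nonneg_bounded[where x=B]) auto
  show "H2_norm f ^ 2 \<le> B" using H2_norm_sq[OF h] suminf_le_const[OF H2_summable[OF h] assms] by simp
qed

lemma H2_bound':
  assumes "\<And>n. (\<Sum>k<n. (cmod (f k))^2) \<le> B^2" "0 \<le> B"
  shows "f \<in> H2" "H2_norm f \<le> B"
  using H2_bound[OF assms(1)] H2_norm_nonneg assms(2) power2_le_imp_le by blast+

lemma L2_partial: "f \<in> H2 \<Longrightarrow> L2_set (\<lambda>k. cmod (f k)) {..<n} \<le> H2_norm f"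
proof -
  assume a: "f \<in> H2"
  have "sqrt (\<Sum>k<n. (cmod (f k))^2) \<le> sqrt (H2_norm f ^2)"
    by (rule real_sqrt_le_mono) (rule H2_partial_le[OF a])
  also have "\<dots> = H2_norm f" using H2_norm_nonneg[OF a] by simp
  finally show ?thesis unfolding L2_set_def .
qed

lemma H2_add:
  assumes "f \<in> H2" "g \<in> H2"
  shows "(\<lambda>k. f k + g k) \<in> H2" "H2_norm (\<lambda>k. f k + g k) \<le> H2_norm f + H2_norm g"
proof -
  have "(\<Sum>k<n. (cmod (f k + g k))^2) \<le> (H2_norm f + H2_norm g)^2" for n
  proof -
    have "L2_set (\<lambda>k. cmod (f k + g k)) {..<n} \<le> L2_set (\<lambda>k. cmod (f k) + cmod (g k)) {..<n}"
      by (rule L2_set_mono) (auto simp: norm_triangle_ineq)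
    also have "\<dots> \<le> L2_set (\<lambda>k. cmod (f k)) {..<n} + L2_set (\<lambda>k. cmod (g k)) {..<n}"
      by (rule L2_set_triangle_ineq)
    also have "\<dots> \<le> H2_norm f + H2_norm g" using L2_partial assms by (meson add_mono)
    finally have "sqrt (\<Sum>k<n. (cmod (f k + g k))^2) \<le> H2_norm f + H2_norm g"
      unfolding L2_set_def .
    moreover have nn: "0 \<le> (\<Sum>k<n. (cmod (f k + g k))^2)" by (intro sum_nonneg) auto
    ultimately have "(sqrt (\<Sum>k<n. (cmod (f k + g k))^2))^2 \<le> (H2_norm f + H2_norm g)^2"
      by (intro power_mono) auto
    thus ?thesis using nn by simp
  qed
  thus "(\<lambda>k. f k + g k) \<in> H2" "H2_norm (\<lambda>k. f k + g k) \<le> H2_norm f + H2_norm g"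
    using H2_bound'[of "\<lambda>k. f k + g k" "H2_norm f + H2_norm g"] H2_norm_nonneg assms by auto
qed

lemma H2_scale:
  assumes "f \<in> H2"
  shows "(\<lambda>k. c * f k) \<in> H2" "H2_norm (\<lambda>k. c * f k) = cmod c * H2_norm f"
proof -
  have s: "summable (\<lambda>k. (cmod c)^2 * (cmod (f k))^2)"
    using H2_summable[OF assms] by (rule summable_mult)
  thus "(\<lambda>k. c * f k) \<in> H2" by (simp add: H2_def norm_mult power_mult_distrib)
  have "H2_norm (\<lambda>k. c * f k) = sqrt ((cmod c)^2 * (\<Sum>k. (cmod (f k))^2))"
    unfolding H2_norm_def norm_mult power_mult_distrib
    by (simp add: suminf_mult H2_summable[OF assms])
  also have "\<dots> = cmod c * H2_norm f" by (simp add: real_sqrt_mult H2_norm_def)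
  finally show "H2_norm (\<lambda>k. c * f k) = cmod c * H2_norm f" .
qed

lemma H2_diff:
  assumes "f \<in> H2" "g \<in> H2"
  shows "(\<lambda>k. f k - g k) \<in> H2" "H2_norm (\<lambda>k. f k - g k) \<le> H2_norm f + H2_norm g"
  using H2_add[OF assms(1) H2_scale(1)[OF assms(2), of "-1"]] H2_scale(2)[OF assms(2), of "-1"]
  by auto

lemma H2_zero: "(\<lambda>k. 0) \<in> H2" "H2_norm (\<lambda>k. 0) = 0"
  by (auto simp: H2_def H2_norm_def)

lemma H2_sum:
  assumes "finite S" "\<And>s. s \<in> S \<Longrightarrow> g s \<in> H2"
  shows "(\<lambda>k. \<Sum>s\<in>S. c s * g s k) \<in> H2"
  using assms
proof (induction S rule: finite_induct)
  case empty thus ?case by (simp add: H2_zero)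
next
  case (insert x F)
  have "(\<lambda>k. c x * g x k + (\<Sum>s\<in>F. c s * g s k)) \<in> H2"
    using insert by (intro H2_add H2_scale) auto
  thus ?case using insert by simp
qed

definition inn :: "(nat \<Rightarrow> complex) \<Rightarrow> (nat \<Rightarrow> complex) \<Rightarrow> complex" where
  "inn f g = (\<Sum>k. f k * cnj (g k))"

lemma prod_summable:
  assumes "f \<in> H2" "g \<in> H2" and that: "\<And>z. cmod (h z) = cmod z"
  shows "summable (\<lambda>k. f k * h (g k))"
proof (rule summable_norm_cancel, rule summable_comparison_test)
  show "summable (\<lambda>k. ((cmod (f k))^2 + (cmod (g k))^2) / 2)"
    using H2_summable[OF assms(1)] H2_summable[OF assms(2)] by (intro summable_divide summable_add)
  show "\<exists>N. \<forall>n\<ge>N. norm (norm (f n * h (g n))) \<le> ((cmod (f n))^2 + (cmod (g n))^2) / 2"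
  proof (intro exI[of _ 0] allI impI)
    fix n
    have "0 \<le> (cmod (f n) - cmod (g n))^2" by simp
    thus "norm (norm (f n * h (g n))) \<le> ((cmod (f n))^2 + (cmod (g n))^2) / 2"
      by (simp add: norm_mult that power2_diff)
  qed
qed

lemma H2_expand:
  assumes "f \<in> H2" "g \<in> H2"
  shows "H2_norm (\<lambda>k. f k - t * g k) ^ 2 = H2_norm f ^ 2 - 2 * Re (cnj t * inn f g) + (cmod t)^2 * H2_norm g ^ 2"
proof -
  have tg: "(\<lambda>k. t * g k) \<in> H2" using H2_scale assms by auto
  have d: "(\<lambda>k. f k - t * g k) \<in> H2" using H2_diff[OF assms(1) tg] by simp
  have pw: "(cmod (f k - t * g k))^2 = (cmod (f k))^2 - 2 * Re (cnj t * (f k * cnj (g k))) + (cmod t)^2 * (cmod (g k))^2" for k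
    by (simp only: cmod_power2) (simp add: power2_eq_square algebra_simps)
  have s1: "summable (\<lambda>k. f k * cnj (g k))" using prod_summable[OF assms, of cnj] by simp
  have s2: "summable (\<lambda>k. 2 * Re (cnj t * (f k * cnj (g k))))"
    by (intro summable_mult summable_Re s1)
  have s3: "summable (\<lambda>k. (cmod t)^2 * (cmod (g k))^2)" by (intro summable_mult H2_summable assms)
  have "H2_norm (\<lambda>k. f k - t * g k) ^ 2 = (\<Sum>k. (cmod (f k))^2 - 2 * Re (cnj t * (f k * cnj (g k))) + (cmod t)^2 * (cmod (g k))^2)"
    using H2_norm_sq[OF d] pw by simp
  also have "\<dots> = (\<Sum>k. (cmod (f k))^2) - (\<Sum>k. 2 * Re (cnj t * (f k * cnj (g k)))) + (\<Sum>k. (cmod t)^2 * (cmod (g k))^2)"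
    using H2_summable[OF assms(1)] s2 s3 by (simp add: suminf_add suminf_diff summable_diff)
  also have "(\<Sum>k. 2 * Re (cnj t * (f k * cnj (g k)))) = 2 * Re (cnj t * inn f g)"
  proof -
    have "(\<lambda>k. cnj t * (f k * cnj (g k))) sums (cnj t * inn f g)"
      unfolding inn_def using s1 by (intro sums_mult summable_sums)
    hence "(\<lambda>k. Re (cnj t * (f k * cnj (g k)))) sums Re (cnj t * inn f g)" by (rule sums_Re)
    hence "(\<lambda>k. 2 * Re (cnj t * (f k * cnj (g k)))) sums (2 * Re (cnj t * inn f g))" by (rule sums_mult)
    thus ?thesis by (rule sums_unique[symmetric])
  qed
  also have "(\<Sum>k. (cmod t)^2 * (cmod (g k))^2) = (cmod t)^2 * H2_norm g ^ 2"
    using H2_norm_sq[OF assms(2)] H2_summable[OF assms(2)] by (simp add: suminf_mult)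
  finally show ?thesis using H2_norm_sq[OF assms(1)] by simp
qed

lemma H2_parallelogram:
  assumes "f \<in> H2" "g \<in> H2"
  shows "H2_norm (\<lambda>k. f k + g k) ^ 2 + H2_norm (\<lambda>k. f k - g k) ^ 2 = 2 * H2_norm f ^ 2 + 2 * H2_norm g ^ 2"
  using H2_expand[OF assms, of 1] H2_expand[OF assms, of "-1"] by simp


lemma amgm: "(a::real) * b \<le> (a^2 + b^2) / 2"
proof -
  have "0 \<le> (a - b)^2" by simp
  thus ?thesis by (simp add: power2_diff)
qed

definition cc :: "complex \<Rightarrow> nat \<Rightarrow> complex" where
  "cc s k = of_nat (k+1) powr (1-s) - of_nat k powr (1-s)"

lemma cc_0: "cc s 0 = 1"
  by (simp add: cc_def)

lemma phi_cc: "phi s k = -(1/s) * cc s k"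
  by (simp add: phi_def cc_def)

lemma cnj_cc: "cnj (cc (cnj s) k) = cc s k"
proof -
  have "cnj (of_nat n powr (1 - cnj s)) = of_nat n powr (1 - s)" for n
    by (subst cnj_powr) auto
  from this[of "k+1"] this[of k] show ?thesis unfolding cc_def by (simp only: complex_cnj_diff)
qed

lemma cnj_kernel: "cnj (zeta_kernel s k) = -(1/s) * cc s k"
  unfolding zeta_kernel_def phi_cc using cnj_cc[of s k] by simp

lemma kpow_sq: "(real k powr (-a))^2 = real k powr (-2*a)"
  by (simp add: power2_eq_square powr_add[symmetric])

lemma seg_lemma:
  fixes k :: nat
  assumes zS: "z \<in> closed_segment (complex_of_nat k) (of_nat (k+1))"
  shows "z \<in> \<real> \<and> real k \<le> Re z"
proof -
  define a where "a = complex_of_nat k"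
  define b where "b = complex_of_nat (k+1)"
  obtain u where u: "0 \<le> u" "u \<le> 1" "z = (1-u) *\<^sub>R a + u *\<^sub>R b"
    using zS unfolding in_segment a_def b_def by blast
  have z: "z = of_real (real k + u)"
    unfolding u(3) a_def b_def scaleR_conv_of_real by (simp add: algebra_simps)
  show ?thesis using u(1) unfolding z by simp
qed

lemma cc_bound:
  assumes "0 < Re s" "1 \<le> k"
  shows "cmod (cc s k) \<le> cmod (1-s) * real k powr (- Re s)"
proof -
  define a where "a = complex_of_nat k"
  define b where "b = complex_of_nat (k+1)"
  let ?S = "closed_segment a b"
  have seg: "z \<in> \<real> \<and> real k \<le> Re z" if zS: "z \<in> ?S" for z
    using seg_lemma[of z k] zS unfolding a_def b_def by blast
  have pos: "0 < Re z" if "z \<in> ?S" for z using seg[OF that] assms(2) by linarith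
  have B: "cmod (b powr (1-s) - a powr (1-s)) \<le> (cmod (1-s) * real k powr (- Re s)) * cmod (b - a)"
  proof (rule field_differentiable_bound[where f = "\<lambda>z. z powr (1-s)" and f' = "\<lambda>z. (1-s) * z powr (1-s-1)"])
    show "convex ?S" by (rule convex_closed_segment)
    show "((\<lambda>z. z powr (1-s)) has_field_derivative (1-s) * z powr (1-s-1)) (at z within ?S)" if "z \<in> ?S" for z
    proof -
      have "z \<notin> \<real>\<^sub>\<le>\<^sub>0" using pos[OF that] by (simp add: complex_nonpos_Reals_iff)
      thus ?thesis by (rule has_field_derivative_at_within[OF has_field_derivative_powr])
    qed
    show "cmod ((1-s) * z powr (1-s-1)) \<le> cmod (1-s) * real k powr (- Re s)" if "z \<in> ?S" for z
    proof -
      have "cmod (z powr (1-s-1)) = Re z powr Re (1-s-1)"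
        using seg[OF that] pos[OF that] by (intro norm_powr_real_powr) auto
      also have "Re (1-s-1) = - Re s" by simp
      also have "Re z powr (- Re s) \<le> real k powr (- Re s)"
        using seg[OF that] assms by (intro powr_mono2') auto
      finally have "cmod (z powr (1-s-1)) \<le> real k powr (- Re s)" .
      hence "cmod (1-s) * cmod (z powr (1-s-1)) \<le> cmod (1-s) * real k powr (- Re s)"
        by (rule mult_left_mono) simp
      thus ?thesis by (simp only: norm_mult)
    qed
    show "b \<in> ?S" by (rule ends_in_segment)
    show "a \<in> ?S" by (rule ends_in_segment)
  qed
  have "cmod (b - a) = 1" unfolding a_def b_def by simp
  with B show ?thesis unfolding cc_def a_def b_def by simp
qed

lemma cc_H2:
  assumes "1/2 < Re s"
  shows "cc s \<in> H2"
  unfolding H2_def mem_Collect_eq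
proof (rule summable_comparison_test'[where N=1])
  show "summable (\<lambda>k. (cmod (1-s))^2 * real k powr (-2 * Re s))"
    using assms by (intro summable_mult) (simp add: summable_real_powr_iff)
  show "norm ((cmod (cc s k))^2) \<le> (cmod (1-s))^2 * real k powr (-2 * Re s)" if "1 \<le> k" for k
  proof -
    have "(cmod (cc s k))^2 \<le> (cmod (1-s) * real k powr (- Re s))^2"
      using cc_bound[of s k] assms that by (intro power_mono) auto
    thus ?thesis by (simp add: power_mult_distrib kpow_sq)
  qed
qed

lemma kernel_H2:
  assumes "1/2 < Re s"
  shows "zeta_kernel s \<in> H2"
proof -
  have "(\<lambda>k. (-(1/cnj s)) * cc (cnj s) k) \<in> H2" using assms by (intro H2_scale cc_H2) auto
  thus ?thesis unfolding zeta_kernel_def phi_cc by simp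
qed

lemma G_summable:
  assumes "h \<in> H2" "1/2 < Re s"
  shows "summable (\<lambda>k. h k * cc s k)"
  using prod_summable[OF assms(1) cc_H2[OF assms(2)], of "\<lambda>z. z"] by simp

lemma G_holo:
  assumes "h \<in> H2"
  shows "(\<lambda>s. \<Sum>k. h k * cc s k) holomorphic_on {s. 1/2 < Re s}"
proof (rule holomorphic_uniform_sequence[where f = "\<lambda>n s. \<Sum>k<n. h k * cc s k"])
  show "open {s. 1/2 < Re s}" by (rule open_halfspace_Re_gt)
  show "(\<lambda>s. \<Sum>k<n. h k * cc s k) holomorphic_on {s. 1/2 < Re s}" for n
    unfolding cc_def by (intro holomorphic_intros)
  fix x assume x: "x \<in> {s. 1/2 < Re s}"
  define d where "d = (Re x - 1/2) / 2"
  define \<sigma> where "\<sigma> = Re x - d"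
  define R where "R = cmod (1 - x) + d"
  have d: "0 < d" using x by (simp add: d_def)
  have x': "1/2 < Re x" using x by simp
  have \<sigma>: "1/2 < \<sigma>" using x' unfolding \<sigma>_def d_def by (simp add: field_simps)
  have inb: "\<sigma> \<le> Re s \<and> cmod (1 - s) \<le> R" if "s \<in> cball x d" for s
  proof -
    have "dist x s \<le> d" using that by simp
    hence n: "cmod (x - s) \<le> d" by (simp add: dist_norm)
    have "\<bar>Re (x - s)\<bar> \<le> cmod (x - s)" by (rule abs_Re_le_cmod)
    hence "\<sigma> \<le> Re s" using n by (simp add: \<sigma>_def)
    moreover have "cmod (1 - s) \<le> cmod (1 - x) + cmod (x - s)"
      using norm_triangle_ineq[of "1 - x" "x - s"] by simp
    ultimately show ?thesis using n by (simp add: R_def)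
  qed
  have sub: "cball x d \<subseteq> {s. 1/2 < Re s}"
  proof
    fix s assume "s \<in> cball x d"
    hence "\<sigma> \<le> Re s" using inb by blast
    thus "s \<in> {s. 1/2 < Re s}" using \<sigma> by simp
  qed
  define M where "M = (\<lambda>k. cmod (h k) * (if k = 0 then 1 else R * real k powr (- \<sigma>)))"
  have bound: "norm (h k * cc s k) \<le> M k" if "s \<in> cball x d" for k s
  proof (cases "k = 0")
    case True thus ?thesis by (simp add: M_def cc_0)
  next
    case False
    have "cmod (cc s k) \<le> cmod (1-s) * real k powr (- Re s)"
      using cc_bound[of s k] inb[OF that] \<sigma> False by auto
    also have "\<dots> \<le> R * real k powr (- \<sigma>)"
    proof (rule mult_mono)
      show "cmod (1 - s) \<le> R" using inb[OF that] by blast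
      show "real k powr (- Re s) \<le> real k powr (- \<sigma>)"
        using inb[OF that] False by (intro powr_mono) auto
      show "0 \<le> R" using d by (simp add: R_def)
    qed simp
    finally have "cmod (h k) * cmod (cc s k) \<le> cmod (h k) * (R * real k powr (- \<sigma>))"
      by (rule mult_left_mono) simp
    thus ?thesis using False by (simp add: M_def norm_mult)
  qed
  have sM: "summable M"
  proof (rule summable_comparison_test'[where N=1])
    show "summable (\<lambda>k. R * (((cmod (h k))^2 + real k powr (-2*\<sigma>)) / 2))"
      using H2_summable[OF assms] \<sigma>
      by (intro summable_mult summable_divide summable_add) (auto simp: summable_real_powr_iff)
    show "norm (M k) \<le> R * (((cmod (h k))^2 + real k powr (-2*\<sigma>)) / 2)" if "1 \<le> k" for k
    proof -
      have R: "0 \<le> R" using d by (simp add: R_def)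
      have "cmod (h k) * real k powr (- \<sigma>) \<le> ((cmod (h k))^2 + real k powr (-2*\<sigma>)) / 2"
        using amgm[of "cmod (h k)" "real k powr (- \<sigma>)"] by (simp add: kpow_sq)
      hence "R * (cmod (h k) * real k powr (- \<sigma>)) \<le> R * (((cmod (h k))^2 + real k powr (-2*\<sigma>)) / 2)"
        using R by (rule mult_left_mono)
      moreover have "M k = R * (cmod (h k) * real k powr (- \<sigma>))" using that by (simp add: M_def)
      moreover have "0 \<le> R * (cmod (h k) * real k powr (- \<sigma>))" using R by simp
      ultimately show ?thesis by simp
    qed
  qed
  show "\<exists>d>0. cball x d \<subseteq> {s. 1/2 < Re s} \<and> uniform_limit (cball x d) (\<lambda>n s. \<Sum>k<n. h k * cc s k) (\<lambda>s. \<Sum>k. h k * cc s k) sequentially"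
  proof (intro exI[of _ d] conjI d sub)
    show "uniform_limit (cball x d) (\<lambda>n s. \<Sum>k<n. h k * cc s k) (\<lambda>s. \<Sum>k. h k * cc s k) sequentially"
      using Weierstrass_m_test[where f="\<lambda>k s. h k * cc s k" and M=M and A="cball x d"] bound sM by blast
  qed
qed

lemma G_zero:
  assumes "h \<in> H2" "\<And>s. 1/2 < Re s \<Longrightarrow> Re s < 1 \<Longrightarrow> (\<Sum>k. h k * cc s k) = 0" "1/2 < Re w"
  shows "(\<Sum>k. h k * cc w k) = 0"
proof (rule analytic_continuation[OF G_holo[OF assms(1)]])
  let ?U = "{s. 1/2 < Re s} \<inter> {s. Re s < 1}"
  show "open {s::complex. 1/2 < Re s}" by (rule open_halfspace_Re_gt)
  show "connected {s::complex. 1/2 < Re s}" by (intro convex_connected convex_halfspace_Re_gt)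
  show "?U \<subseteq> {s. 1/2 < Re s}" by auto
  show "3/4 \<in> {s::complex. 1/2 < Re s}" by simp
  have "open ?U" by (intro open_Int open_halfspace_Re_gt open_halfspace_Re_lt)
  moreover have "(3/4::complex) \<in> ?U" by simp
  ultimately have "3/4 \<in> interior ?U" by (simp only: interior_open)
  thus "3/4 islimpt ?U" by (rule interior_limit_point)
  show "(\<Sum>k. h k * cc z k) = 0" if "z \<in> ?U" for z using that assms(2) by auto
  show "w \<in> {s. 1/2 < Re s}" using assms(3) by simp
qed



lemma geo_zero:
  fixes x C q :: real
  assumes "0 \<le> q" "q < 1" "\<And>N. x \<le> C * q ^ Suc N"
  shows "x \<le> 0"
proof -
  have "(\<lambda>N. q ^ N) \<longlonglongrightarrow> 0" using assms by (intro LIMSEQ_power_zero) simp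
  hence "(\<lambda>N. q ^ Suc N) \<longlonglongrightarrow> 0" by (rule LIMSEQ_Suc)
  hence "(\<lambda>N. C * q ^ Suc N) \<longlonglongrightarrow> C * 0" by (intro tendsto_mult tendsto_const)
  hence "(\<lambda>N. C * q ^ Suc N) \<longlonglongrightarrow> 0" by simp
  thus ?thesis by (rule LIMSEQ_le_const) (use assms(3) in blast)
qed

definition EE :: "nat \<Rightarrow> nat \<Rightarrow> real" where
  "EE N k = (if k = 0 then 0 else 1 / real k ^ (N+1))"

lemma powr_nat_EE: "complex_of_nat n powr (1 - of_nat (N+2)) = of_real (EE N n)"
proof (cases "n = 0")
  case True thus ?thesis by (simp add: EE_def)
next
  case False
  have e: "(1 - of_nat (N+2) :: complex) = - of_nat (N+1)" by simp
  have "complex_of_nat n powr (1 - of_nat (N+2)) = inverse (complex_of_nat n powr of_nat (N+1))"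
    unfolding e by (rule powr_minus)
  also have "\<dots> = inverse (complex_of_nat n ^ (N+1))" using False by (subst powr_complexpow) auto
  also have "\<dots> = of_real (EE N n)" using False by (simp add: EE_def divide_inverse)
  finally show ?thesis .
qed

lemma cc_nat: "cc (of_nat (N+2)) k = of_real (EE N (k+1) - EE N k)"
  unfolding cc_def powr_nat_EE of_real_diff ..

lemma EE_nonneg: "0 \<le> EE N k" by (simp add: EE_def)

lemma EE_dec:
  assumes "1 \<le> k" shows "EE N (k+1) \<le> EE N k"
proof -
  have a: "real k ^ (N+1) \<le> real (k+1) ^ (N+1)" by (rule power_mono) auto
  have b: "0 < real k ^ (N+1)" using assms by simp
  have "1 / real (k+1) ^ (N+1) \<le> 1 / real k ^ (N+1)"
    by (rule divide_left_mono[OF a]) (use b in auto)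
  thus ?thesis using assms unfolding EE_def by simp
qed

lemma EE_pos: "1 \<le> k \<Longrightarrow> 0 < EE N k" by (simp add: EE_def)

lemma EE_lim: "(\<lambda>j. EE N (j + c)) \<longlonglongrightarrow> 0"
proof -
  have "(\<lambda>j. 1 / real j) \<longlonglongrightarrow> 0" by (rule lim_1_over_n)
  hence "(\<lambda>j. (1 / real j) ^ (N+1)) \<longlonglongrightarrow> 0 ^ (N+1)" by (rule tendsto_power)
  hence l: "(\<lambda>j. (1 / real j) ^ (N+1)) \<longlonglongrightarrow> 0" by simp
  have ev: "\<forall>\<^sub>F j in sequentially. (1 / real j) ^ (N+1) = EE N j"
    unfolding eventually_sequentially
    by (rule exI[of _ 1]) (auto simp: EE_def power_one_over)
  have "(\<lambda>j. EE N j) \<longlonglongrightarrow> 0" by (rule Lim_transform_eventually[OF l ev])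
  thus ?thesis by (rule LIMSEQ_ignore_initial_segment[where k=c, simplified])
qed

lemma EE_ratio: "1 \<le> m \<Longrightarrow> EE N (m+1) = EE N m * (real m / real (m+1)) ^ Suc N"
  by (simp add: EE_def power_divide)

lemma dirichlet_zero:
  assumes h: "h \<in> H2" and G: "\<And>N. (\<Sum>k. h k * cc (of_nat (N+2)) k) = 0"
  shows "h k = 0"
proof -
  define B where "B = H2_norm h"
  have B0: "0 \<le> B" unfolding B_def by (rule H2_norm_nonneg[OF h])
  have hb: "cmod (h k) \<le> B" for k
  proof -
    have "(cmod (h k))^2 \<le> (\<Sum>j<Suc k. (cmod (h j))^2)" by (rule member_le_sum) auto
    also have "\<dots> \<le> B^2" using H2_partial_le[OF h] unfolding B_def .
    finally show ?thesis using B0 by (rule power2_le_imp_le)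
  qed
  have step: "h m = h 0" if m1: "1 \<le> m" and prev: "\<forall>j<m. h j = h 0" for m
  proof -
    define A where "A = h 0"
    have key: "cmod (A - h m) \<le> (2 * B) * (real m / real (m+1)) ^ Suc N" for N
    proof -
      define E where "E = EE N"
      define t where "t = (\<lambda>k. h k * of_real (E (k+1) - E k))"
      have sum_t: "summable t" using G_summable[OF h, of "of_nat (N+2)"] unfolding t_def cc_nat E_def by simp
      have G0: "suminf t = 0" using G[of N] unfolding t_def cc_nat E_def .
      have split: "suminf t = (\<Sum>j. t (j + (m+1))) + (\<Sum>k<m+1. t k)"
        by (rule suminf_split_initial_segment[OF sum_t])
      have "(\<Sum>k<m. t k) = (\<Sum>k<m. A * of_real (E (Suc k) - E k))"
      proof (rule sum.cong[OF refl])
        fix k assume "k \<in> {..<m}"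
        hence "h k = A" using prev unfolding A_def by blast
        thus "t k = A * of_real (E (Suc k) - E k)" unfolding t_def by simp
      qed
      also have "\<dots> = A * of_real (\<Sum>k<m. E (Suc k) - E k)" by (simp add: sum_distrib_left)
      also have "(\<Sum>k<m. E (Suc k) - E k) = E m - E 0" by (rule sum_lessThan_telescope)
      finally have head: "(\<Sum>k<m+1. t k) = A * of_real (E m) + h m * of_real (E (m+1) - E m)"
        by (simp add: t_def E_def EE_def)
      have Elim: "(\<lambda>j. E (j + (m+1))) \<longlonglongrightarrow> 0" unfolding E_def by (rule EE_lim)
      have ts: "(\<lambda>j. E (j + (m+1)) - E (Suc j + (m+1))) sums (E (0 + (m+1)) - 0)"
        using telescope_sums'[OF Elim] by simp
      hence ts': "(\<lambda>j. B * (E (j + (m+1)) - E (Suc j + (m+1)))) sums (B * E (m+1))"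
        using sums_mult[OF ts, of B] by simp
      have tb: "norm (t (j + (m+1))) \<le> B * (E (j + (m+1)) - E (Suc j + (m+1)))" for j
      proof -
        have d: "E (Suc j + (m+1)) \<le> E (j + (m+1))" unfolding E_def using EE_dec[of "j + (m+1)" N] by simp
        have nr: "norm (complex_of_real (E (j + (m+1) + 1) - E (j + (m+1)))) = E (j + (m+1)) - E (Suc j + (m+1))"
          unfolding norm_of_real using d by simp
        have "norm (t (j + (m+1))) = cmod (h (j + (m+1))) * (E (j + (m+1)) - E (Suc j + (m+1)))"
          unfolding t_def norm_mult nr ..
        also have "\<dots> \<le> B * (E (j + (m+1)) - E (Suc j + (m+1)))"
          by (rule mult_right_mono[OF hb]) (use d in simp)
        finally show ?thesis .
      qed
      have T: "cmod (\<Sum>j. t (j + (m+1))) \<le> B * E (m+1)"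
        using norm_suminf_le[OF tb sums_summable[OF ts']] sums_unique[OF ts'] by simp
      define T where "T = (\<Sum>j. t (j + (m+1)))"
      have eq: "(A - h m) * of_real (E m) = - (h m * of_real (E (m+1)) + T)"
      proof -
        have "0 = T + (\<Sum>k<m+1. t k)" using split unfolding G0 T_def .
        hence "0 = T + (A * of_real (E m) + h m * of_real (E (m+1) - E m))" unfolding head .
        hence "(A - h m) * of_real (E m) + (h m * of_real (E (m+1)) + T) = 0"
          by (simp add: algebra_simps)
        thus ?thesis by (metis add_eq_0_iff2 minus_add_distrib add.commute diff_conv_add_uminus add_diff_cancel_left' eq_neg_iff_add_eq_0)
      qed
      have "cmod ((A - h m) * of_real (E m)) \<le> cmod (h m) * E (m+1) + cmod T"
        unfolding eq norm_minus_cancel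
        using norm_triangle_ineq[of "h m * of_real (E (m+1))" T] EE_nonneg[of N "m+1"]
        by (simp add: norm_mult E_def)
      also have "\<dots> \<le> B * E (m+1) + B * E (m+1)"
        using add_mono[OF mult_right_mono[OF hb[of m] EE_nonneg[of N "m+1"]] T] unfolding T_def E_def .
      finally have "cmod (A - h m) * E m \<le> (2 * B) * E (m+1)"
        using EE_pos[OF m1, of N] by (simp add: norm_mult E_def)
      also have "\<dots> = (2 * B) * (real m / real (m+1)) ^ Suc N * E m"
        unfolding E_def EE_ratio[OF m1] by simp
      finally have "cmod (A - h m) * E m \<le> ((2 * B) * (real m / real (m+1)) ^ Suc N) * E m"
        by (simp only: mult.assoc)
      moreover have "0 < E m" unfolding E_def by (rule EE_pos[OF m1])
      ultimately show ?thesis by (rule mult_right_le_imp_le)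
    qed
    have q0: "0 \<le> real m / real (m+1)" by simp
    have q1: "real m / real (m+1) < 1" by simp
    have "cmod (A - h m) \<le> 0" by (rule geo_zero[OF q0 q1 key])
    thus ?thesis unfolding A_def by simp
  qed
  have all: "h k = h 0" for k
  proof (induction k rule: less_induct)
    case (less k)
    show ?case
    proof (cases "k = 0")
      case True thus ?thesis by simp
    next
      case False
      have p: "\<forall>j<k. h j = h 0" using less.IH by blast
      have k1: "1 \<le> k" using False by simp
      show ?thesis by (rule step[OF k1 p])
    qed
  qed
  have fe: "(\<lambda>k. (cmod (h k))^2) = (\<lambda>k. (cmod (h 0))^2)"
    by (rule ext, rule arg_cong[where f="\<lambda>z. (cmod z)^2"], rule all)
  have "summable (\<lambda>k. (cmod (h 0))^2)" using H2_summable[OF h] unfolding fe .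
  hence "(cmod (h 0))^2 = 0" by (simp only: summable_const_iff)
  hence "h 0 = 0" by simp
  thus ?thesis using all[of k] by (rule ssubst[rotated])
qed



definition Vset :: "(nat \<Rightarrow> complex) set" where
  "Vset = {g. \<exists>S c. finite S \<and> S \<subseteq> {s. 1/2 < Re s \<and> Re s < 1} \<and> g = (\<lambda>k. \<Sum>s\<in>S. c s * zeta_kernel s k)}"

lemma V_H2:
  assumes "g \<in> Vset" shows "g \<in> H2"
proof -
  obtain S c where S: "finite S" "S \<subseteq> {s. 1/2 < Re s \<and> Re s < 1}" and g: "g = (\<lambda>k. \<Sum>s\<in>S. c s * zeta_kernel s k)"
    using assms unfolding Vset_def by blast
  have "(\<lambda>k. \<Sum>s\<in>S. c s * zeta_kernel s k) \<in> H2"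
  proof (rule H2_sum[OF S(1)])
    fix s assume "s \<in> S"
    hence "1/2 < Re s" using S(2) by blast
    thus "zeta_kernel s \<in> H2" by (rule kernel_H2)
  qed
  thus ?thesis unfolding g .
qed

lemma V_add:
  assumes "g1 \<in> Vset" "g2 \<in> Vset" shows "(\<lambda>k. g1 k + g2 k) \<in> Vset"
proof -
  obtain S1 c1 where S1: "finite S1" "S1 \<subseteq> {s. 1/2 < Re s \<and> Re s < 1}" and g1: "g1 = (\<lambda>k. \<Sum>s\<in>S1. c1 s * zeta_kernel s k)"
    using assms(1) unfolding Vset_def by blast
  obtain S2 c2 where S2: "finite S2" "S2 \<subseteq> {s. 1/2 < Re s \<and> Re s < 1}" and g2: "g2 = (\<lambda>k. \<Sum>s\<in>S2. c2 s * zeta_kernel s k)"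
    using assms(2) unfolding Vset_def by blast
  define c where "c s = (if s \<in> S1 then c1 s else 0) + (if s \<in> S2 then c2 s else 0)" for s
  have fin: "finite (S1 \<union> S2)" using S1 S2 by simp
  have "g1 k + g2 k = (\<Sum>s\<in>S1 \<union> S2. c s * zeta_kernel s k)" for k
  proof -
    have e1: "g1 k = (\<Sum>s\<in>S1 \<union> S2. if s \<in> S1 then c1 s * zeta_kernel s k else 0)"
      unfolding g1 sum.inter_restrict[OF fin, symmetric] by (rule sum.cong) auto
    have e2: "g2 k = (\<Sum>s\<in>S1 \<union> S2. if s \<in> S2 then c2 s * zeta_kernel s k else 0)"
      unfolding g2 sum.inter_restrict[OF fin, symmetric] by (rule sum.cong) auto
    show ?thesis unfolding e1 e2 sum.distrib[symmetric] by (rule sum.cong) (auto simp: c_def algebra_simps)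
  qed
  hence "(\<lambda>k. g1 k + g2 k) = (\<lambda>k. \<Sum>s\<in>S1 \<union> S2. c s * zeta_kernel s k)" by (rule ext)
  moreover have "S1 \<union> S2 \<subseteq> {s. 1/2 < Re s \<and> Re s < 1}" using S1 S2 by blast
  ultimately show ?thesis unfolding Vset_def using fin
    by (intro CollectI exI[of _ "S1 \<union> S2"] exI[of _ c] conjI)
qed

lemma V_scale:
  assumes "g \<in> Vset" shows "(\<lambda>k. a * g k) \<in> Vset"
proof -
  obtain S c where S: "finite S" "S \<subseteq> {s. 1/2 < Re s \<and> Re s < 1}" and g: "g = (\<lambda>k. \<Sum>s\<in>S. c s * zeta_kernel s k)"
    using assms unfolding Vset_def by blast
  have "(\<lambda>k. a * g k) = (\<lambda>k. \<Sum>s\<in>S. (a * c s) * zeta_kernel s k)"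
    unfolding g by (simp add: sum_distrib_left mult.assoc)
  thus ?thesis unfolding Vset_def using S by (intro CollectI exI[of _ S] exI[of _ "\<lambda>s. a * c s"] conjI)
qed

lemma V_zero: "(\<lambda>k. 0) \<in> Vset"
  unfolding Vset_def by (rule CollectI, rule exI[of _ "{}"]) simp

lemma V_kernel:
  assumes "1/2 < Re s" "Re s < 1" shows "zeta_kernel s \<in> Vset"
proof -
  have "zeta_kernel s = (\<lambda>k. \<Sum>s'\<in>{s}. (\<lambda>_. 1) s' * zeta_kernel s' k)" by simp
  moreover have "{s} \<subseteq> {s. 1/2 < Re s \<and> Re s < 1}" using assms by simp
  ultimately show ?thesis unfolding Vset_def
    by (intro CollectI exI[of _ "{s}"] exI[of _ "\<lambda>_. 1"] conjI) simp_all
qed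

lemma orth:
  assumes h: "h \<in> H2" and v: "v \<in> H2" and m: "\<And>t. H2_norm h \<le> H2_norm (\<lambda>k. h k - t * v k)"
  shows "inn h v = 0"
proof (rule ccontr)
  assume I0: "inn h v \<noteq> 0"
  define I where "I = inn h v"
  define r where "r = 1 / ((H2_norm v)^2 + 1)"
  have r0: "0 < r" unfolding r_def by (simp add: add_nonneg_pos)
  define t where "t = complex_of_real r * I"
  have "(H2_norm h)^2 \<le> (H2_norm (\<lambda>k. h k - t * v k))^2"
    using m[of t] H2_norm_nonneg[OF h] by (intro power_mono) auto
  also have "\<dots> = (H2_norm h)^2 - 2 * Re (cnj t * I) + (cmod t)^2 * (H2_norm v)^2"
    unfolding I_def by (rule H2_expand[OF h v])
  finally have ineq: "2 * Re (cnj t * I) \<le> (cmod t)^2 * (H2_norm v)^2" by simp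
  have c1: "Re (cnj t * I) = r * (cmod I)^2"
    unfolding t_def by (simp only: cmod_power2) (simp add: power2_eq_square algebra_simps)
  have c2: "(cmod t)^2 = r^2 * (cmod I)^2"
    unfolding t_def using r0 by (simp add: norm_mult power_mult_distrib)
  have pI: "0 < (cmod I)^2" using I0 unfolding I_def by simp
  have "2 * r * (cmod I)^2 \<le> r * (r * (H2_norm v)^2) * (cmod I)^2"
    using ineq unfolding c1 c2 by (simp add: power2_eq_square algebra_simps)
  hence "2 * r \<le> r * (r * (H2_norm v)^2)" using pI by (simp add: mult_right_le_imp_le)
  hence "2 \<le> r * (H2_norm v)^2" using r0 by simp
  moreover have "r * (H2_norm v)^2 < 1" unfolding r_def by (simp add: add_nonneg_pos)
  ultimately show False by simp
qed

lemma kernel_inn: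
  assumes h: "h \<in> H2" and s: "1/2 < Re s"
  shows "inn h (zeta_kernel s) = -(1/s) * (\<Sum>k. h k * cc s k)"
proof -
  have "inn h (zeta_kernel s) = (\<Sum>k. (-(1/s)) * (h k * cc s k))"
    unfolding inn_def cnj_kernel by (simp add: algebra_simps)
  also have "\<dots> = -(1/s) * (\<Sum>k. h k * cc s k)"
    by (rule suminf_mult[OF G_summable[OF h s]])
  finally show ?thesis .
qed



lemma H2_norm_swap: "H2_norm (\<lambda>k. a k - b k) = H2_norm (\<lambda>k. b k - a k)"
  unfolding H2_norm_def by (simp add: norm_minus_commute)

lemma coord_le: "f \<in> H2 \<Longrightarrow> cmod (f k) \<le> H2_norm f"
proof -
  assume h: "f \<in> H2"
  have "(cmod (f k))^2 \<le> (\<Sum>j<Suc k. (cmod (f j))^2)" by (rule member_le_sum) auto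
  also have "\<dots> \<le> (H2_norm f)^2" by (rule H2_partial_le[OF h])
  finally show ?thesis using H2_norm_nonneg[OF h] by (rule power2_le_imp_le)
qed

lemma lim_le_aux:
  fixes a b :: real
  assumes "\<And>n. a - X n \<le> b" "X \<longlonglongrightarrow> 0"
  shows "a \<le> b"
proof -
  have "(\<lambda>n. a - X n) \<longlonglongrightarrow> a - 0" by (intro tendsto_diff tendsto_const assms(2))
  hence "(\<lambda>n. a - X n) \<longlonglongrightarrow> a" by simp
  thus ?thesis by (rule LIMSEQ_le_const2) (use assms(1) in blast)
qed

lemma orth_exists:
  assumes f: "f \<in> H2" and eps: "0 < \<epsilon>" and far: "\<And>g. g \<in> Vset \<Longrightarrow> \<epsilon> \<le> H2_norm (\<lambda>k. f k - g k)"
  shows "\<exists>h\<in>H2. (\<exists>k. h k \<noteq> 0) \<and> (\<forall>v\<in>Vset. \<forall>t. H2_norm h \<le> H2_norm (\<lambda>k. h k - t * v k))"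
proof -
  define D where "D = (\<lambda>g. H2_norm (\<lambda>k. f k - g k)) ` Vset"
  define d where "d = Inf D"
  have Dne: "D \<noteq> {}" unfolding D_def using V_zero by blast
  have Dbdd: "bdd_below D" unfolding D_def bdd_below_def using far by blast
  have dge: "\<epsilon> \<le> d" unfolding d_def by (rule cInf_greatest[OF Dne]) (use far in \<open>auto simp: D_def\<close>)
  have dle: "d \<le> H2_norm (\<lambda>k. f k - g k)" if "g \<in> Vset" for g
    unfolding d_def by (rule cInf_lower[OF _ Dbdd]) (use that in \<open>simp add: D_def\<close>)
  define e where "e n = 1 / real (Suc n)" for n
  have e0: "0 < e n" for n unfolding e_def by simp
  have e1: "e n \<le> 1" for n unfolding e_def by simp
  have emono: "n \<le> m \<Longrightarrow> e m \<le> e n" for n m unfolding e_def by (simp add: frac_le)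
  have elim: "e \<longlonglongrightarrow> 0" unfolding e_def using LIMSEQ_Suc[OF lim_1_over_n] by simp
  have "\<exists>g. g \<in> Vset \<and> H2_norm (\<lambda>k. f k - g k) < d + e n" for n
  proof -
    have "Inf D < d + e n" using e0[of n] unfolding d_def by simp
    then obtain x where "x \<in> D" "x < d + e n" using cInf_lessD[OF Dne] by blast
    thus ?thesis unfolding D_def by blast
  qed
  then obtain G where GV: "\<And>n. G n \<in> Vset" and Gd: "\<And>n. H2_norm (\<lambda>k. f k - G n k) < d + e n"
    by metis
  have GH: "G n \<in> H2" for n by (rule V_H2[OF GV])
  have FH: "(\<lambda>k. f k - G n k) \<in> H2" for n by (rule H2_diff(1)[OF f GH])
  define K where "K = 2 * (2 * d + 1)"
  have d0: "0 < d" using dge eps by simp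
  have K0: "0 \<le> K" unfolding K_def using d0 by simp
  have rsq: "(H2_norm (\<lambda>k. f k - G n k))^2 \<le> d^2 + e n * (2 * d + 1)" for n
  proof -
    have "(H2_norm (\<lambda>k. f k - G n k))^2 \<le> (d + e n)^2"
      using Gd[of n] H2_norm_nonneg[OF FH[of n]] by (intro power_mono) auto
    also have "\<dots> = d^2 + e n * (2 * d + e n)" by (simp add: power2_eq_square algebra_simps)
    also have "\<dots> \<le> d^2 + e n * (2 * d + 1)" using e0[of n] e1[of n] by (intro add_left_mono mult_left_mono) auto
    finally show ?thesis .
  qed
  have cauchy: "(H2_norm (\<lambda>k. G n k - G m k))^2 \<le> K * (e n + e m)" for n m
  proof -
    let ?F1 = "\<lambda>k. f k - G n k" and ?F2 = "\<lambda>k. f k - G m k"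
    define M where "M = (\<lambda>k. (1/2) * (G n k + G m k))"
    have MV: "M \<in> Vset" unfolding M_def by (intro V_scale V_add GV)
    have par: "(H2_norm (\<lambda>k. ?F1 k + ?F2 k))^2 + (H2_norm (\<lambda>k. ?F1 k - ?F2 k))^2 = 2 * (H2_norm ?F1)^2 + 2 * (H2_norm ?F2)^2"
      by (rule H2_parallelogram[OF FH FH])
    have e_sum: "(\<lambda>k. ?F1 k + ?F2 k) = (\<lambda>k. 2 * (f k - M k))" unfolding M_def by (simp add: algebra_simps)
    have "H2_norm (\<lambda>k. ?F1 k + ?F2 k) = 2 * H2_norm (\<lambda>k. f k - M k)"
      unfolding e_sum using H2_scale(2)[OF H2_diff(1)[OF f V_H2[OF MV]], of 2] by simp
    hence big: "4 * d^2 \<le> (H2_norm (\<lambda>k. ?F1 k + ?F2 k))^2"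
      using dle[OF MV] d0 by (simp add: power2_eq_square mult_mono)
    have e_diff: "(\<lambda>k. ?F1 k - ?F2 k) = (\<lambda>k. G m k - G n k)" by simp
    have "(H2_norm (\<lambda>k. G n k - G m k))^2 = (H2_norm (\<lambda>k. ?F1 k - ?F2 k))^2"
      unfolding e_diff using H2_norm_swap[of "\<lambda>k. G n k" "\<lambda>k. G m k"] by simp
    also have "\<dots> \<le> 2 * (d^2 + e n * (2 * d + 1)) + 2 * (d^2 + e m * (2 * d + 1)) - 4 * d^2"
      using par big rsq[of n] rsq[of m] by (smt (verit))
    also have "\<dots> = K * (e n + e m)" unfolding K_def by (simp add: algebra_simps)
    finally show ?thesis .
  qed
  define \<Delta> where "\<Delta> n = sqrt (2 * K * e n)" for n
  have Dnn: "0 \<le> \<Delta> n" for n unfolding \<Delta>_def using K0 e0[of n] by simp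
  have Dmono: "n \<le> m \<Longrightarrow> \<Delta> m \<le> \<Delta> n" for n m
    unfolding \<Delta>_def using K0 emono by (simp add: mult_left_mono)
  have Dlim: "\<Delta> \<longlonglongrightarrow> 0"
  proof -
    have "(\<lambda>n. sqrt (2 * K * e n)) \<longlonglongrightarrow> sqrt (2 * K * 0)" by (intro tendsto_real_sqrt tendsto_mult tendsto_const elim)
    thus ?thesis unfolding \<Delta>_def by simp
  qed
  have GG: "H2_norm (\<lambda>k. G n k - G m k) \<le> \<Delta> n" if "n \<le> m" for n m
  proof -
    have "(H2_norm (\<lambda>k. G n k - G m k))^2 \<le> K * (e n + e m)" by (rule cauchy)
    also have "\<dots> \<le> K * (e n + e n)" using emono[OF that] K0 by (intro mult_left_mono) auto
    also have "\<dots> = (\<Delta> n)^2" unfolding \<Delta>_def using K0 e0[of n] by simp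
    finally show ?thesis using Dnn[of n] by (rule power2_le_imp_le)
  qed
  have GGc: "cmod (G n k - G m k) \<le> \<Delta> n" if "n \<le> m" for n m k
    using coord_le[OF H2_diff(1)[OF GH[of n] GH[of m]], of k] GG[OF that] by simp
  have conv: "(\<lambda>n. G n k) \<longlonglongrightarrow> lim (\<lambda>n. G n k)" for k
  proof -
    have "Cauchy (\<lambda>n. G n k)"
    proof (rule metric_CauchyI)
      fix \<eta> :: real assume \<eta>: "0 < \<eta>"
      obtain M where M: "\<Delta> M < \<eta>" using Dlim \<eta> unfolding lim_sequentially dist_real_def
        using Dnn by (metis abs_of_nonneg diff_zero order_refl)
      show "\<exists>M. \<forall>m\<ge>M. \<forall>n\<ge>M. dist (G m k) (G n k) < \<eta>"
      proof (intro exI[of _ M] allI impI)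
        fix m n assume mM: "M \<le> m" and nM: "M \<le> n"
        have "dist (G m k) (G n k) \<le> \<Delta> (min m n)"
        proof (cases "m \<le> n")
          case True thus ?thesis using GGc[OF True, of k] by (simp add: dist_norm)
        next
          case False
          hence "n \<le> m" by simp
          thus ?thesis using GGc[OF \<open>n \<le> m\<close>, of k] False by (simp add: dist_norm norm_minus_commute)
        qed
        also have "\<dots> \<le> \<Delta> M" using mM nM by (intro Dmono) simp
        finally show "dist (G m k) (G n k) < \<eta>" using M by simp
      qed
    qed
    thus ?thesis using Cauchy_convergent convergent_LIMSEQ_iff by blast
  qed
  define p where "p k = lim (\<lambda>n. G n k)" for k
  have pconv: "(\<lambda>n. G n k) \<longlonglongrightarrow> p k" for k unfolding p_def by (rule conv)
  have Gp: "(\<lambda>k. G n k - p k) \<in> H2 \<and> H2_norm (\<lambda>k. G n k - p k) \<le> \<Delta> n" for n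
  proof -
    have "(\<Sum>k<N. (cmod (G n k - p k))^2) \<le> (\<Delta> n)^2" for N
    proof -
      have "(\<lambda>m. \<Sum>k<N. (cmod (G n k - G m k))^2) \<longlonglongrightarrow> (\<Sum>k<N. (cmod (G n k - p k))^2)"
        by (intro tendsto_sum tendsto_power tendsto_norm tendsto_diff tendsto_const pconv)
      moreover have "\<exists>M. \<forall>m\<ge>M. (\<Sum>k<N. (cmod (G n k - G m k))^2) \<le> (\<Delta> n)^2"
      proof (intro exI[of _ n] allI impI)
        fix m assume "n \<le> m"
        have "(\<Sum>k<N. (cmod (G n k - G m k))^2) \<le> (H2_norm (\<lambda>k. G n k - G m k))^2"
          by (rule H2_partial_le[OF H2_diff(1)[OF GH GH]])
        also have "\<dots> \<le> (\<Delta> n)^2" using GG[OF \<open>n \<le> m\<close>] H2_norm_nonneg[OF H2_diff(1)[OF GH GH]]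
          by (intro power_mono) auto
        finally show "(\<Sum>k<N. (cmod (G n k - G m k))^2) \<le> (\<Delta> n)^2" .
      qed
      ultimately show ?thesis by (rule LIMSEQ_le_const2)
    qed
    thus ?thesis using H2_bound'[of "\<lambda>k. G n k - p k" "\<Delta> n"] Dnn[of n] by auto
  qed
  have GpH: "(\<lambda>k. G n k - p k) \<in> H2" for n using Gp by blast
  have GpN: "H2_norm (\<lambda>k. G n k - p k) \<le> \<Delta> n" for n using Gp by blast
  define h where "h k = f k - p k" for k
  have hsplit: "h = (\<lambda>k. (f k - G n k) + (G n k - p k))" for n unfolding h_def by (rule ext) simp
  have hH: "h \<in> H2" unfolding hsplit[of 0] by (rule H2_add(1)[OF FH GpH])
  have hup: "H2_norm h \<le> d"
  proof -
    have "H2_norm h \<le> d + e n + \<Delta> n" for n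
    proof -
      have "H2_norm h \<le> H2_norm (\<lambda>k. f k - G n k) + H2_norm (\<lambda>k. G n k - p k)"
        unfolding hsplit[of n] by (rule H2_add(2)[OF FH GpH])
      thus ?thesis using Gd[of n] GpN[of n] by simp
    qed
    moreover have "(\<lambda>n. d + e n + \<Delta> n) \<longlonglongrightarrow> d + 0 + 0" by (intro tendsto_add tendsto_const elim Dlim)
    ultimately show ?thesis by (intro LIMSEQ_le_const[where X = "\<lambda>n. d + e n + \<Delta> n"]) auto
  qed
  have hlow: "d \<le> H2_norm (\<lambda>k. h k - t * v k)" if vV: "v \<in> Vset" for v t
  proof (rule lim_le_aux[OF _ Dlim])
    fix n
    have tv: "(\<lambda>k. t * v k) \<in> H2" by (rule H2_scale(1)[OF V_H2[OF vV]])
    have hv: "(\<lambda>k. h k - t * v k) \<in> H2" by (rule H2_diff(1)[OF hH tv])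
    have pG: "(\<lambda>k. p k - G n k) \<in> H2" using H2_scale(1)[OF GpH[of n], of "-1"] by simp
    have Gt: "(\<lambda>k. G n k + t * v k) \<in> Vset" by (intro V_add V_scale GV vV)
    have "d \<le> H2_norm (\<lambda>k. f k - (G n k + t * v k))" by (rule dle[OF Gt])
    also have "(\<lambda>k. f k - (G n k + t * v k)) = (\<lambda>k. (h k - t * v k) + (p k - G n k))"
      unfolding h_def by (rule ext) simp
    also have "H2_norm \<dots> \<le> H2_norm (\<lambda>k. h k - t * v k) + H2_norm (\<lambda>k. p k - G n k)"
      by (rule H2_add(2)[OF hv pG])
    also have "H2_norm (\<lambda>k. p k - G n k) = H2_norm (\<lambda>k. G n k - p k)" by (rule H2_norm_swap)
    finally show "d - \<Delta> n \<le> H2_norm (\<lambda>k. h k - t * v k)" using GpN[of n] by simp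
  qed
  have hnz: "\<exists>k. h k \<noteq> 0"
  proof (rule ccontr)
    assume "\<not> (\<exists>k. h k \<noteq> 0)"
    hence "h = (\<lambda>k. 0)" by auto
    hence "H2_norm (\<lambda>k. h k - 0 * (\<lambda>k. 0) k) = 0" using H2_zero by simp
    thus False using hlow[OF V_zero, of 0] d0 by simp
  qed
  show ?thesis
  proof (intro bexI[of _ h] conjI hnz ballI allI)
    show "h \<in> H2" by (rule hH)
    fix v t assume "v \<in> Vset"
    show "H2_norm h \<le> H2_norm (\<lambda>k. h k - t * v k)" using hup hlow[OF \<open>v \<in> Vset\<close>, of t] by simp
  qed
qed

theorem mainTheorem13:
  shows "\<forall>f \<in> H2. \<forall>\<epsilon> > 0. \<exists>S c. finite S \<and> S \<subseteq> {s. 1/2 < Re s \<and> Re s < 1} \<and>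
           H2_norm (\<lambda>k. f k - (\<Sum>s\<in>S. c s * zeta_kernel s k)) < \<epsilon>"
proof (intro ballI allI impI)
  fix f :: "nat \<Rightarrow> complex" and \<epsilon> :: real
  assume f: "f \<in> H2" and eps: "0 < \<epsilon>"
  show "\<exists>S c. finite S \<and> S \<subseteq> {s. 1/2 < Re s \<and> Re s < 1} \<and>
           H2_norm (\<lambda>k. f k - (\<Sum>s\<in>S. c s * zeta_kernel s k)) < \<epsilon>"
  proof (rule ccontr)
    assume na: "\<not> ?thesis"
    have far: "\<epsilon> \<le> H2_norm (\<lambda>k. f k - g k)" if gV: "g \<in> Vset" for g
    proof -
      obtain S c where S: "finite S" "S \<subseteq> {s. 1/2 < Re s \<and> Re s < 1}" and g: "g = (\<lambda>k. \<Sum>s\<in>S. c s * zeta_kernel s k)"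
        using gV unfolding Vset_def by blast
      have "\<not> H2_norm (\<lambda>k. f k - (\<Sum>s\<in>S. c s * zeta_kernel s k)) < \<epsilon>"
        using na S by blast
      thus ?thesis unfolding g by simp
    qed
    obtain h where h: "h \<in> H2" and hnz: "\<exists>k. h k \<noteq> 0"
      and hmin: "\<And>v t. v \<in> Vset \<Longrightarrow> H2_norm h \<le> H2_norm (\<lambda>k. h k - t * v k)"
      using orth_exists[OF f eps far] by blast
    have G0: "(\<Sum>k. h k * cc s k) = 0" if "1/2 < Re s" "Re s < 1" for s
    proof -
      have kv: "zeta_kernel s \<in> Vset" using that by (rule V_kernel)
      have "inn h (zeta_kernel s) = 0"
        by (rule orth[OF h V_H2[OF kv]]) (rule hmin[OF kv])
      hence "-(1/s) * (\<Sum>k. h k * cc s k) = 0" using kernel_inn[OF h that(1)] by simp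
      moreover have "s \<noteq> 0" using that by auto
      ultimately show ?thesis by simp
    qed
    have GN: "(\<Sum>k. h k * cc (of_nat (N+2)) k) = 0" for N
      by (rule G_zero[OF h G0]) auto
    have "h k = 0" for k by (rule dirichlet_zero[OF h GN])
    thus False using hnz by blast
  qed
qed

end
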